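(* For every $\beta>0$, every $\lambda\in(0,n)$ with $n\ge\lambda\ge\frac{16}{9}\log\frac2\beta$, every $r\in\mathbb{N}$ and every $X=(x_1,\dots,x_n)\in[0,1]^n$, \[ \Pr\left[\left|P^{\mathbb{R}}_{n,\lambda,r}(X)-\sum_{i=1}^n x_i\right|\ge\frac{\sqrt2}{r}\sqrt{n\log\frac2\beta}+\frac{n}{n-\lambda}\sqrt{2\frac{\lambda}{r}\log\frac2\beta}\right]<2\beta. \]
   Context: Bit randomizer $R^{0/1}_{n,\lambda}(b)$, $b\in\{0,1\}$, $\lambda\in(0,n)$: draw $\mathbf{b}\sim\mathrm{Ber}(\lambda/n)$; output $b$ if $\mathbf{b}=0$, a fresh $\mathrm{Ber}(1/2)$ bit if $\mathbf{b}=1$. Encoder $E_r(x)$, $x\in[0,1]$: $\mu=\lceil xr\rceil$, $p=xr-\mu+1$, and for $j=1,\dots,r$: $b_j=1$ if $j<\mu$, $b_j\sim\mathrm{Ber}(p)$ if $j=\mu$, $b_j=0$ if $j>\mu$. Real-sum protocol $P^{\mathbb{R}}_{n,\lambda,r}$: user $i$ computes $(b_{i,1},\dots,b_{i,r})=E_r(x_i)$ and sends the $r$ messages $y_{i,j}=R^{0/1}_{n,\lambda}(b_{i,j})$ (all randomness independent); the $nr$ messages are shuffled uniformly at random; the analyzer outputs $\frac1r\cdot\frac{n}{n-\lambda}\left(\sum_j\sum_i y_{i,j}-\frac{\lambda r}{2}\right)$. $\log$ is the natural logarithm. *)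

theory Defs
  imports "HOL-Probability.Probability"
begin

fun seq_pmf :: "'a pmf list \<Rightarrow> 'a list pmf" where
  "seq_pmf [] = return_pmf []"
| "seq_pmf (p # ps) = do { x \<leftarrow> p; xs \<leftarrow> seq_pmf ps; return_pmf (x # xs) }"

definition randomizer :: "nat \<Rightarrow> real \<Rightarrow> bool \<Rightarrow> bool pmf" where
  "randomizer n lam b = do {
     c \<leftarrow> bernoulli_pmf (lam / real n);
     if c then bernoulli_pmf (1/2) else return_pmf b }"

definition encoder :: "nat \<Rightarrow> real \<Rightarrow> bool list pmf" where
  "encoder r x = (let mu = \<lceil>x * real r\<rceil>; p = x * real r - of_int mu + 1 in
     seq_pmf (map (\<lambda>j::nat. if int j < mu then return_pmf True
                            else if int j = mu then bernoulli_pmf p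
                            else return_pmf False) [1..<r+1]))"

definition user_msgs :: "nat \<Rightarrow> real \<Rightarrow> nat \<Rightarrow> real \<Rightarrow> bool list pmf" where
  "user_msgs n lam r x = do { bs \<leftarrow> encoder r x; seq_pmf (map (randomizer n lam) bs) }"

definition shuffle :: "'a list \<Rightarrow> 'a list pmf" where
  "shuffle ys = do {
     \<sigma> \<leftarrow> pmf_of_set {\<sigma>. \<sigma> permutes {..<length ys}};
     return_pmf (map (\<lambda>k. ys ! \<sigma> k) [0..<length ys]) }"

definition analyzer :: "nat \<Rightarrow> real \<Rightarrow> nat \<Rightarrow> bool list \<Rightarrow> real" where
  "analyzer n lam r ys = (1 / real r) * (real n / (real n - lam)) *
     ((\<Sum>y\<leftarrow>ys. if y then 1 else 0) - lam * real r / 2)"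

definition real_sum_protocol :: "nat \<Rightarrow> real \<Rightarrow> nat \<Rightarrow> real list \<Rightarrow> real pmf" where
  "real_sum_protocol n lam r X = do {
     yss \<leftarrow> seq_pmf (map (user_msgs n lam r) X);
     zs \<leftarrow> shuffle (concat yss);
     return_pmf (analyzer n lam r zs) }"

end

theory Submission
  imports Defs
begin

lemma exp_quad:
  fixes s :: real assumes "\<bar>s\<bar> \<le> 11/10"
  shows "exp s \<le> 1 + s + s\<^sup>2"
proof -
  obtain t where t: "\<bar>t\<bar> \<le> \<bar>s\<bar>" and e: "exp s = (\<Sum>m<4. (s ^ m) / fact m) + (exp t / fact 4) * s ^ 4"
    using Maclaurin_exp_le[of s 4] by blast
  have "exp (11/20::real) \<le> 1 + 11/20 + (11/20)\<^sup>2" by (rule exp_bound) auto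
  hence h1: "exp (11/20::real) \<le> 19/10" by (simp add: power2_eq_square)
  have "exp (11/10::real) = exp (11/20) * exp (11/20)" by (simp flip: exp_add)
  also have "\<dots> \<le> 19/10 * (19/10)" using h1 by (intro mult_mono) auto
  finally have "exp (11/10::real) \<le> 361/100" by simp
  moreover have "exp t \<le> exp (11/10)" using t assms by simp
  ultimately have E: "exp t \<le> 361/100" by linarith
  have E0: "exp t > 0" by simp
  have sum4: "(\<Sum>m<4. (s ^ m) / fact m) = 1 + s + s^2/2 + s^3/6"
    by (simp add: lessThan_nat_numeral fact_numeral eval_nat_numeral)
  have s2: "s^2 \<le> 121/100"
  proof -
    have "\<bar>s\<bar>^2 \<le> (11/10)^2" by (rule power_mono) (use assms in auto)
    thus ?thesis by (simp add: power2_eq_square)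
  qed
  have key: "s^3/6 + exp t / 24 * s^4 \<le> s^2/2"
  proof -
    have "exp t * s^2 \<le> 361/100 * (121/100)" using E s2 E0 by (intro mult_mono) auto
    moreover have "s \<le> 11/10" using assms by simp
    ultimately have "s/6 + exp t / 24 * s^2 \<le> 1/2" by (simp add: field_simps)
    hence "s^2 * (s/6 + exp t / 24 * s^2) \<le> s^2 * (1/2)" by (intro mult_left_mono) auto
    thus ?thesis by (simp add: field_simps power_def)
  qed
  show ?thesis using e sum4 key by (simp add: fact_numeral)
qed

lemma bern_mgf:
  fixes s p :: real assumes "0 \<le> p" "p \<le> 1" "\<bar>s\<bar> \<le> 11/10"
  shows "exp (-s*p) * (1 - p + p * exp s) \<le> exp (p * s\<^sup>2)"
proof -
  have "1 - p + p * exp s \<le> 1 + p * (s + s\<^sup>2)"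
  proof -
    have "p * exp s \<le> p * (1 + s + s\<^sup>2)" by (rule mult_left_mono[OF exp_quad[OF assms(3)] assms(1)])
    thus ?thesis by (simp add: algebra_simps)
  qed
  also have "\<dots> \<le> exp (p * (s + s\<^sup>2))" by (rule exp_ge_add_one_self)
  finally have "exp (-s*p) * (1 - p + p * exp s) \<le> exp (-s*p) * exp (p * (s + s\<^sup>2))"
    by (intro mult_left_mono) auto
  also have "\<dots> = exp (p * s\<^sup>2)" by (simp flip: exp_add add: algebra_simps)
  finally show ?thesis .
qed

lemma hoeff_mgf:
  fixes s p :: real assumes "0 \<le> p" "p \<le> 1"
  shows "exp (-s*p) * (1 - p + p * exp s) \<le> exp (s\<^sup>2 / 8)"
proof (cases "s \<ge> 0")
  case True
  have pos: "1 + p * (exp s - 1) > 0" using assms True by (smt (verit) mult_nonneg_nonneg one_le_exp_iff)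
  have "-s * p + ln (1 + p * (exp s - 1)) \<le> s\<^sup>2 / 8"
    using Hoeffdings_lemma_aux[OF True assms(1)] by simp
  hence "exp (-s * p + ln (1 + p * (exp s - 1))) \<le> exp (s\<^sup>2 / 8)" by simp
  moreover have "exp (-s * p + ln (1 + p * (exp s - 1))) = exp (-s*p) * (1 - p + p * exp s)"
    by (simp only: exp_add exp_ln[OF pos]) (simp add: algebra_simps)
  ultimately show ?thesis by argo
next
  case False
  define h where "h = -s"
  have h: "h \<ge> 0" using False h_def by simp
  have p': "0 \<le> 1 - p" using assms by simp
  have pos: "1 + (1 - p) * (exp h - 1) > 0" using assms h by (smt (verit) mult_nonneg_nonneg one_le_exp_iff)
  have "-h * (1 - p) + ln (1 + (1 - p) * (exp h - 1)) \<le> h\<^sup>2 / 8"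
    using Hoeffdings_lemma_aux[OF h p'] by simp
  hence "exp (-h * (1 - p) + ln (1 + (1 - p) * (exp h - 1))) \<le> exp (h\<^sup>2 / 8)" by simp
  hence "exp (-h * (1 - p)) * (1 + (1 - p) * (exp h - 1)) \<le> exp (s\<^sup>2 / 8)"
    by (simp only: exp_add exp_ln[OF pos]) (simp add: h_def)
  moreover have "exp (-s*p) * (1 - p + p * exp s) = exp (-h * (1 - p)) * (1 + (1 - p) * (exp h - 1))"
  proof -
    have "exp (-s*p) * (1 - p + p * exp s) = exp (h*p) * (1 - p + p * exp (-h))" by (simp add: h_def)
    also have "\<dots> = exp (h*p - h) * (exp h * (1 - p) + p)"
      by (simp add: exp_diff exp_minus field_simps)
    also have "\<dots> = exp (-h * (1 - p)) * (1 + (1 - p) * (exp h - 1))"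
      by (simp add: algebra_simps)
    finally show ?thesis .
  qed
  ultimately show ?thesis by simp
qed

lemma seq_pmf_map: "seq_pmf (map (map_pmf f) ps) = map_pmf (map f) (seq_pmf ps)"
  by (induction ps) (simp_all add: map_pmf_def bind_assoc_pmf bind_return_pmf)

lemma set_seq_pmf: "xs \<in> set_pmf (seq_pmf ps) \<Longrightarrow> list_all2 (\<lambda>x p. x \<in> set_pmf p) xs ps"
  by (induction ps arbitrary: xs) auto

lemma nn_integral_seq_pmf:
  fixes G :: "'a \<Rightarrow> ennreal"
  shows "(\<integral>\<^sup>+xs. prod_list (map G xs) \<partial>seq_pmf ps) = prod_list (map (\<lambda>p::'a pmf. \<integral>\<^sup>+x. G x \<partial>measure_pmf p) ps)"
proof (induction ps)
  case Nil
  then show ?case by simp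
next
  case (Cons p ps)
  have "(\<integral>\<^sup>+xs. prod_list (map G xs) \<partial>seq_pmf (p # ps))
     = (\<integral>\<^sup>+x. \<integral>\<^sup>+xs. G x * prod_list (map G xs) \<partial>seq_pmf ps \<partial>p)" by simp
  also have "\<dots> = (\<integral>\<^sup>+x. G x * (\<integral>\<^sup>+xs. prod_list (map G xs) \<partial>seq_pmf ps) \<partial>p)"
    by (subst nn_integral_cmult) auto
  also have "\<dots> = (\<integral>\<^sup>+x. G x \<partial>p) * (\<integral>\<^sup>+xs. prod_list (map G xs) \<partial>seq_pmf ps)"
    by (subst nn_integral_multc) auto
  finally show ?case using Cons by simp
qed

lemma prod_list_ennreal_le:
  assumes "\<And>p. p \<in> set ps \<Longrightarrow> f p \<le> ennreal K" "K \<ge> 0"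
  shows "prod_list (map f ps) \<le> ennreal (K ^ length ps)"
  using assms
proof (induction ps)
  case Nil
  then show ?case by simp
next
  case (Cons p ps)
  have "f p * prod_list (map f ps) \<le> ennreal K * ennreal (K ^ length ps)"
    using Cons by (intro mult_mono) auto
  thus ?case using Cons by (simp add: ennreal_mult)
qed

lemma ennreal_exp_sum_list:
  "ennreal (exp (s * sum_list (map f xs))) = prod_list (map (\<lambda>x. ennreal (exp (s * f x))) xs)"
  by (induction xs) (auto simp: algebra_simps exp_add ennreal_mult)

lemma chernoff_pmf:
  fixes M :: "'a pmf" and F :: "'a \<Rightarrow> real"
  assumes "s > 0" "c \<ge> 0" "(\<integral>\<^sup>+x. ennreal (exp (s * F x)) \<partial>M) \<le> ennreal c"
  shows "measure_pmf.prob M {x. t \<le> F x} \<le> c * exp (-s*t)"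
proof -
  have "emeasure (measure_pmf M) {x. t \<le> F x} = (\<integral>\<^sup>+x. indicator {x. t \<le> F x} x \<partial>M)"
    by simp
  also have "\<dots> \<le> (\<integral>\<^sup>+x. ennreal (exp (s * F x)) * ennreal (exp (-s*t)) \<partial>M)"
  proof (intro nn_integral_mono)
    fix x
    show "indicator {x. t \<le> F x} x \<le> ennreal (exp (s * F x)) * ennreal (exp (-s*t))"
    proof (cases "t \<le> F x")
      case True
      have "0 \<le> s * (F x - t)" using True assms by simp
      hence "1 \<le> exp (s * F x + -s*t)" by (simp add: algebra_simps)
      hence "1 \<le> exp (s * F x) * exp (-s*t)" by (subst (asm) exp_add)
      thus ?thesis using True by (simp add: ennreal_mult[symmetric])
    qed simp
  qed
  also have "\<dots> = (\<integral>\<^sup>+x. ennreal (exp (s * F x)) \<partial>M) * ennreal (exp (-s*t))"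
    by (subst nn_integral_multc) auto
  also have "\<dots> \<le> ennreal c * ennreal (exp (-s*t))"
    using assms by (intro mult_mono) auto
  also have "\<dots> = ennreal (c * exp (-s*t))" using assms by (simp add: ennreal_mult)
  finally show ?thesis
    using assms by (simp add: measure_pmf.emeasure_eq_measure ennreal_le_iff)
qed

definition ind :: "bool \<Rightarrow> real" where "ind b = (if b then 1 else 0)"

definition rt :: "nat \<Rightarrow> real \<Rightarrow> bool \<Rightarrow> (bool \<times> bool) pmf" where
  "rt n lam b = map_pmf (\<lambda>y. (b, y)) (randomizer n lam b)"

definition ujoint :: "nat \<Rightarrow> real \<Rightarrow> nat \<Rightarrow> real \<Rightarrow> (real \<times> bool list \<times> (bool \<times> bool) list) pmf" where
  "ujoint n lam r x = do { bs \<leftarrow> encoder r x; pys \<leftarrow> seq_pmf (map (rt n lam) bs); return_pmf (x, bs, pys) }"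

definition dd :: "nat \<Rightarrow> real \<Rightarrow> bool \<times> bool \<Rightarrow> real" where
  "dd n lam q = ind (snd q) - ((1 - lam / real n) * ind (fst q) + lam / (2 * real n))"

lemma randomizer_eq:
  assumes "0 \<le> lam" "lam \<le> real n"
  shows "randomizer n lam b = bernoulli_pmf (if b then 1 - lam / (2 * real n) else lam / (2 * real n))"
proof (rule pmf_eqI)
  fix i
  have q: "0 \<le> lam / real n" "lam / real n \<le> 1" using assms
    by (auto simp: divide_le_eq) 
  show "pmf (randomizer n lam b) i = pmf (bernoulli_pmf (if b then 1 - lam / (2 * real n) else lam / (2 * real n))) i"
    unfolding randomizer_def using q
    by (subst pmf_bind) (cases b; cases i; auto simp: pmf_bind field_simps)
qed

lemma rt_mgf:
  assumes "0 \<le> lam" "lam \<le> real n" "\<bar>s\<bar> \<le> 11/10"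
  shows "(\<integral>\<^sup>+q. ennreal (exp (s * dd n lam q)) \<partial>rt n lam b) \<le> ennreal (exp (lam / (2 * real n) * s\<^sup>2))"
proof -
  define p where "p = lam / (2 * real n)"
  have p: "0 \<le> p" "p \<le> 1" using assms unfolding p_def by (auto simp: divide_le_eq)
  have lamn: "lam / real n = 2 * p" unfolding p_def by simp
  have RT: "randomizer n lam True = bernoulli_pmf (1 - p)"
    using randomizer_eq[OF assms(1,2), of True] unfolding p_def by simp
  have RF: "randomizer n lam False = bernoulli_pmf p"
    using randomizer_eq[OF assms(1,2), of False] unfolding p_def by simp
  have d: "dd n lam (True, True) = p" "dd n lam (True, False) = p - 1"
    "dd n lam (False, True) = 1 - p" "dd n lam (False, False) = - p"
    by (simp_all only: dd_def ind_def lamn p_def[symmetric] fst_conv snd_conv if_True if_False) (simp_all add: algebra_simps)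
  show ?thesis
  proof (cases b)
    case False
    have "(\<integral>\<^sup>+q. ennreal (exp (s * dd n lam q)) \<partial>rt n lam b)
        = (\<integral>\<^sup>+y. ennreal (exp (s * dd n lam (False, y))) \<partial>bernoulli_pmf p)"
      by (simp add: rt_def RF False)
    also have "\<dots> = ennreal (exp (s * (1 - p))) * p + ennreal (exp (s * (- p))) * (1 - p)"
      using p by (subst nn_integral_bernoulli_pmf) (auto simp: d)
    also have "\<dots> = ennreal (exp (s * (1 - p)) * p + exp (s * (- p)) * (1 - p))"
      using p by (simp add: ennreal_mult ennreal_plus)
    also have "exp (s * (1 - p)) * p + exp (s * (- p)) * (1 - p) = exp (-s*p) * (1 - p + p * exp s)"
    proof -
      have e: "exp (s * (1 - p)) = exp s * exp (-s*p)" by (subst exp_add[symmetric]) (simp add: algebra_simps)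
      show ?thesis unfolding e by (simp add: algebra_simps)
    qed
    also have "ennreal \<dots> \<le> ennreal (exp (p * s\<^sup>2))" using bern_mgf[OF p assms(3)] by simp
    finally show ?thesis unfolding p_def by (simp add: mult.commute)
  next
    case True
    have "(\<integral>\<^sup>+q. ennreal (exp (s * dd n lam q)) \<partial>rt n lam b)
        = (\<integral>\<^sup>+y. ennreal (exp (s * dd n lam (True, y))) \<partial>bernoulli_pmf (1 - p))"
      by (simp add: rt_def RT True)
    also have "\<dots> = ennreal (exp (s * p)) * (1 - p) + ennreal (exp (s * (p - 1))) * (1 - (1 - p))"
      using p by (subst nn_integral_bernoulli_pmf) (auto simp: d)
    also have "\<dots> = ennreal (exp (s * p) * (1 - p) + exp (s * (p - 1)) * p)"
      using p by (simp add: ennreal_mult ennreal_plus)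
    also have "exp (s * p) * (1 - p) + exp (s * (p - 1)) * p = exp (-(-s)*p) * (1 - p + p * exp (-s))"
    proof -
      have e: "exp (s * (p - 1)) = exp (-s) * exp (s*p)" by (subst exp_add[symmetric]) (simp add: algebra_simps)
      show ?thesis unfolding e by (simp add: algebra_simps)
    qed
    also have "ennreal \<dots> \<le> ennreal (exp (p * (-s)\<^sup>2))" using bern_mgf[OF p, of "-s"] assms(3) by simp
    finally show ?thesis unfolding p_def by (simp add: mult.commute)
  qed
qed

lemma encoder_len: "bs \<in> set_pmf (encoder r x) \<Longrightarrow> length bs = r"
  unfolding encoder_def Let_def by (drule set_seq_pmf) (auto dest: list_all2_lengthD)

lemma prod_upt_if:
  fixes A K :: real and m :: int
  shows "prod_list (map (\<lambda>j. if int j < m then A else if int j = m then K else 1) [1..<k+1])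
    = (if m \<le> 0 then 1 else if m \<le> int k then A ^ (nat m - 1) * K else A ^ k)"
proof (induction k)
  case 0
  then show ?case by simp
next
  case (Suc k)
  have "[1..<Suc k + 1] = [1..<k+1] @ [Suc k]" by simp
  hence "prod_list (map (\<lambda>j. if int j < m then A else if int j = m then K else 1) [1..<Suc k+1])
     = prod_list (map (\<lambda>j. if int j < m then A else if int j = m then K else 1) [1..<k+1])
       * (if int (Suc k) < m then A else if int (Suc k) = m then K else 1)" by simp
  also have "\<dots> = (if m \<le> 0 then 1 else if m \<le> int k then A ^ (nat m - 1) * K else A ^ k)
       * (if int (Suc k) < m then A else if int (Suc k) = m then K else 1)" using Suc by simp
  also have "\<dots> = (if m \<le> 0 then 1 else if m \<le> int (Suc k) then A ^ (nat m - 1) * K else A ^ Suc k)"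
  proof -
    consider "m \<le> 0" | "0 < m" "m \<le> int k" | "m = int (Suc k)" | "m > int (Suc k)" by linarith
    then show ?thesis
    proof cases
      case 3
      hence "nat m - 1 = k" by simp
      then show ?thesis using 3 by simp
    qed auto
  qed
  finally show ?case .
qed

lemma prod_list_ennreal:
  "(\<And>x. x \<in> set xs \<Longrightarrow> 0 \<le> f x) \<Longrightarrow> prod_list (map (\<lambda>x. ennreal (f x)) xs) = ennreal (prod_list (map f xs))"
proof (induction xs)
  case (Cons a xs)
  have "0 \<le> prod_list (map f xs)" by (rule prod_list_nonneg) (use Cons.prems in auto)
  then show ?case using Cons by (simp add: ennreal_mult)
qed simp

lemma enc_mgf:
  assumes "0 \<le> x" "x \<le> 1" "r \<ge> 1"
  shows "(\<integral>\<^sup>+bs. ennreal (exp (s * (sum_list (map ind bs) - real r * x))) \<partial>encoder r x) \<le> ennreal (exp (s\<^sup>2 / 8))"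
proof -
  define \<mu> where "\<mu> = \<lceil>x * real r\<rceil>"
  define p where "p = x * real r - of_int \<mu> + 1"
  have mu1: "of_int \<mu> - 1 < x * real r" "x * real r \<le> of_int \<mu>" unfolding \<mu>_def
    by (meson ceiling_correct)+
  have p01: "0 \<le> p" "p \<le> 1" using mu1 unfolding p_def by auto
  define g where "g = (\<lambda>j::nat. if int j < \<mu> then return_pmf True
                            else if int j = \<mu> then bernoulli_pmf p
                            else return_pmf False)"
  define h where "h = (\<lambda>j::nat. if int j < \<mu> then exp s else if int j = \<mu> then 1 - p + p * exp s else 1)"
  have enc: "encoder r x = seq_pmf (map g [1..<r+1])"
    unfolding encoder_def Let_def g_def \<mu>_def p_def by simp
  have hpos: "0 \<le> h j" for j unfolding h_def using p01
    by (auto intro!: add_nonneg_nonneg mult_nonneg_nonneg)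
  have gint: "(\<integral>\<^sup>+b. ennreal (exp (s * ind b)) \<partial>g j) = ennreal (h j)" for j
    unfolding g_def h_def using p01
    by (auto simp: ind_def ennreal_mult[symmetric] ennreal_plus[symmetric] algebra_simps simp del: ennreal_plus)
  have "(\<integral>\<^sup>+bs. ennreal (exp (s * (sum_list (map ind bs) - real r * x))) \<partial>encoder r x)
      = (\<integral>\<^sup>+bs. ennreal (exp (- s * real r * x)) * ennreal (exp (s * sum_list (map ind bs))) \<partial>encoder r x)"
    by (intro nn_integral_cong) (simp add: ennreal_mult[symmetric] exp_add[symmetric] algebra_simps)
  also have "\<dots> = ennreal (exp (- s * real r * x)) * (\<integral>\<^sup>+bs. ennreal (exp (s * sum_list (map ind bs))) \<partial>encoder r x)"
    by (subst nn_integral_cmult) auto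
  also have "(\<integral>\<^sup>+bs. ennreal (exp (s * sum_list (map ind bs))) \<partial>encoder r x)
      = prod_list (map (\<lambda>j. ennreal (h j)) [1..<r+1])"
    unfolding ennreal_exp_sum_list enc nn_integral_seq_pmf by (simp add: gint o_def)
  also have "\<dots> = ennreal (prod_list (map h [1..<r+1]))"
    using hpos by (intro prod_list_ennreal)
  also have "prod_list (map h [1..<r+1]) = (if \<mu> \<le> 0 then 1 else if \<mu> \<le> int r then exp s ^ (nat \<mu> - 1) * (1 - p + p * exp s) else exp s ^ r)"
    unfolding h_def by (rule prod_upt_if)
  also have "ennreal (exp (- s * real r * x)) * ennreal \<dots> \<le> ennreal (exp (s\<^sup>2 / 8))"
  proof (cases "\<mu> \<le> 0")
    case True
    hence "x * real r = 0" using mu1 assms by (smt (verit) mult_nonneg_nonneg of_int_le_0_iff of_nat_0_le_iff)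
    hence "- s * real r * x = 0" by (simp add: algebra_simps)
    hence e: "exp (- s * real r * x) = 1" by simp
    have i: "(if \<mu> \<le> 0 then 1 else if \<mu> \<le> int r then exp s ^ (nat \<mu> - 1) * (1 - p + p * exp s) else exp s ^ r) = (1::real)"
      using True by simp
    show ?thesis unfolding e i by simp
  next
    case False
    have mur: "\<mu> \<le> int r" unfolding \<mu>_def using assms
      by (simp add: ceiling_le_iff mult_left_le_one_le)
    have k: "real (nat \<mu> - 1) = of_int \<mu> - 1" using False by (simp add: of_nat_diff)
    have "exp (- s * real r * x) * (exp s ^ (nat \<mu> - 1) * (1 - p + p * exp s))
        = exp (- s * real r * x + real (nat \<mu> - 1) * s) * (1 - p + p * exp s)"
      by (simp only: exp_add exp_of_nat_mult mult.assoc)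
    also have "- s * real r * x + real (nat \<mu> - 1) * s = -s * p"
      unfolding k p_def by (simp add: algebra_simps)
    finally have eq: "exp (- s * real r * x) * (exp s ^ (nat \<mu> - 1) * (1 - p + p * exp s)) = exp (-s * p) * (1 - p + p * exp s)" .
    have "exp (- s * real r * x) * (exp s ^ (nat \<mu> - 1) * (1 - p + p * exp s)) \<le> exp (s\<^sup>2 / 8)"
      unfolding eq using hoeff_mgf[OF p01, of s] by simp
    thus ?thesis using False mur
      by (simp add: ennreal_mult[symmetric] p01 add_nonneg_nonneg)
  qed
  finally show ?thesis .
qed

definition Cw :: "real \<times> bool list \<times> (bool \<times> bool) list \<Rightarrow> real" where
  "Cw w = sum_list (map ind (fst (snd w)))"
definition Dw :: "nat \<Rightarrow> real \<Rightarrow> real \<times> bool list \<times> (bool \<times> bool) list \<Rightarrow> real" where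
  "Dw n lam w = sum_list (map (dd n lam) (snd (snd w)))"
definition Yw :: "real \<times> bool list \<times> (bool \<times> bool) list \<Rightarrow> real" where
  "Yw w = sum_list (map (\<lambda>q. ind (snd q)) (snd (snd w)))"

lemma list_all2_fst: "list_all2 (\<lambda>q b. fst q = b) pys bs \<Longrightarrow> map fst pys = bs"
  by (induction rule: list_all2_induct) auto

lemma ujoint_support:
  assumes "w \<in> set_pmf (ujoint n lam r x)"
  shows "fst w = x" "length (fst (snd w)) = r" "map fst (snd (snd w)) = fst (snd w)"
proof -
  obtain bs pys where w: "w = (x, bs, pys)" and bs: "bs \<in> set_pmf (encoder r x)"
    and pys: "pys \<in> set_pmf (seq_pmf (map (rt n lam) bs))"
    using assms unfolding ujoint_def by auto
  have "list_all2 (\<lambda>q p. q \<in> set_pmf p) pys (map (rt n lam) bs)" by (rule set_seq_pmf[OF pys])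
  hence "list_all2 (\<lambda>q b. q \<in> set_pmf (rt n lam b)) pys bs" by (simp add: list_all2_map2)
  hence "list_all2 (\<lambda>q b. fst q = b) pys bs"
    by (rule list_all2_mono) (auto simp: rt_def)
  hence "map fst pys = bs" by (rule list_all2_fst)
  thus "fst w = x" "length (fst (snd w)) = r" "map fst (snd (snd w)) = fst (snd w)"
    using w encoder_len[OF bs] by auto
qed

lemma ujoint_D_mgf:
  assumes "0 \<le> lam" "lam \<le> real n" "\<bar>s\<bar> \<le> 11/10"
  shows "(\<integral>\<^sup>+w. ennreal (exp (s * Dw n lam w)) \<partial>ujoint n lam r x) \<le> ennreal (exp (lam / (2 * real n) * s\<^sup>2) ^ r)"
proof -
  have "(\<integral>\<^sup>+w. ennreal (exp (s * Dw n lam w)) \<partial>ujoint n lam r x)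
     = (\<integral>\<^sup>+bs. \<integral>\<^sup>+pys. ennreal (exp (s * sum_list (map (dd n lam) pys))) \<partial>seq_pmf (map (rt n lam) bs) \<partial>encoder r x)"
    by (simp add: ujoint_def Dw_def)
  also have "\<dots> = (\<integral>\<^sup>+bs. prod_list (map (\<lambda>p::_ pmf. \<integral>\<^sup>+q. ennreal (exp (s * dd n lam q)) \<partial>measure_pmf p) (map (rt n lam) bs)) \<partial>encoder r x)"
    unfolding ennreal_exp_sum_list nn_integral_seq_pmf ..
  also have "\<dots> \<le> (\<integral>\<^sup>+bs. ennreal (exp (lam / (2 * real n) * s\<^sup>2) ^ r) \<partial>encoder r x)"
  proof (rule nn_integral_mono_AE, unfold AE_measure_pmf_iff, intro ballI)
    fix bs assume bs: "bs \<in> set_pmf (encoder r x)"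
    have "prod_list (map (\<lambda>p::_ pmf. \<integral>\<^sup>+q. ennreal (exp (s * dd n lam q)) \<partial>measure_pmf p) (map (rt n lam) bs))
       \<le> ennreal (exp (lam / (2 * real n) * s\<^sup>2) ^ length (map (rt n lam) bs))"
      by (rule prod_list_ennreal_le) (use rt_mgf[OF assms] in auto)
    thus "prod_list (map (\<lambda>p::_ pmf. \<integral>\<^sup>+q. ennreal (exp (s * dd n lam q)) \<partial>measure_pmf p) (map (rt n lam) bs))
       \<le> ennreal (exp (lam / (2 * real n) * s\<^sup>2) ^ r)" using encoder_len[OF bs] by simp
  qed
  also have "\<dots> = ennreal (exp (lam / (2 * real n) * s\<^sup>2) ^ r)" by simp
  finally show ?thesis .
qed

lemma ujoint_H_mgf:
  assumes "0 \<le> x" "x \<le> 1" "r \<ge> 1"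
  shows "(\<integral>\<^sup>+w. ennreal (exp (s * (Cw w - real r * fst w))) \<partial>ujoint n lam r x) \<le> ennreal (exp (s\<^sup>2 / 8))"
proof -
  have "(\<integral>\<^sup>+w. ennreal (exp (s * (Cw w - real r * fst w))) \<partial>ujoint n lam r x)
     = (\<integral>\<^sup>+bs. ennreal (exp (s * (sum_list (map ind bs) - real r * x))) \<partial>encoder r x)"
    by (simp add: ujoint_def Cw_def)
  also have "\<dots> \<le> ennreal (exp (s\<^sup>2 / 8))" by (rule enc_mgf[OF assms])
  finally show ?thesis .
qed

lemma seq_support:
  "ws \<in> set_pmf (seq_pmf (map f X)) \<Longrightarrow> list_all2 (\<lambda>w x. w \<in> set_pmf (f x)) ws X"
  by (drule set_seq_pmf) (simp add: list_all2_map2)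

lemma glob_D_mgf:
  assumes "0 \<le> lam" "lam \<le> real n" "\<bar>s\<bar> \<le> 11/10"
  shows "(\<integral>\<^sup>+ws. ennreal (exp (s * sum_list (map (Dw n lam) ws))) \<partial>seq_pmf (map (ujoint n lam r) X))
     \<le> ennreal ((exp (lam / (2 * real n) * s\<^sup>2) ^ r) ^ length X)"
proof -
  have "(\<integral>\<^sup>+ws. ennreal (exp (s * sum_list (map (Dw n lam) ws))) \<partial>seq_pmf (map (ujoint n lam r) X))
     = prod_list (map (\<lambda>p::_ pmf. \<integral>\<^sup>+w. ennreal (exp (s * Dw n lam w)) \<partial>measure_pmf p) (map (ujoint n lam r) X))"
    unfolding ennreal_exp_sum_list nn_integral_seq_pmf ..
  also have "\<dots> \<le> ennreal ((exp (lam / (2 * real n) * s\<^sup>2) ^ r) ^ length (map (ujoint n lam r) X))"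
    by (rule prod_list_ennreal_le) (use ujoint_D_mgf[OF assms] in auto)
  finally show ?thesis by simp
qed

lemma glob_H_mgf:
  assumes "\<forall>x\<in>set X. 0 \<le> x \<and> x \<le> 1" "r \<ge> 1"
  shows "(\<integral>\<^sup>+ws. ennreal (exp (s * sum_list (map (\<lambda>w. Cw w - real r * fst w) ws))) \<partial>seq_pmf (map (ujoint n lam r) X))
     \<le> ennreal (exp (s\<^sup>2 / 8) ^ length X)"
proof -
  have "(\<integral>\<^sup>+ws. ennreal (exp (s * sum_list (map (\<lambda>w. Cw w - real r * fst w) ws))) \<partial>seq_pmf (map (ujoint n lam r) X))
     = prod_list (map (\<lambda>p::_ pmf. \<integral>\<^sup>+w. ennreal (exp (s * (Cw w - real r * fst w))) \<partial>measure_pmf p) (map (ujoint n lam r) X))"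
    unfolding ennreal_exp_sum_list nn_integral_seq_pmf ..
  also have "\<dots> \<le> ennreal (exp (s\<^sup>2 / 8) ^ length (map (ujoint n lam r) X))"
    by (rule prod_list_ennreal_le) (use ujoint_H_mgf assms in auto)
  finally show ?thesis by simp
qed

lemma sum_list_perm:
  fixes f :: "'a \<Rightarrow> 'b::comm_monoid_add"
  assumes "\<sigma> permutes {..<length ys}"
  shows "sum_list (map f (map (\<lambda>k. ys ! \<sigma> k) [0..<length ys])) = sum_list (map f ys)"
proof -
  have "sum_list (map f (map (\<lambda>k. ys ! \<sigma> k) [0..<length ys])) = (\<Sum>k\<in>{..<length ys}. f (ys ! \<sigma> k))"
    by (simp add: sum_list_sum_nth atLeast0LessThan)
  also have "\<dots> = (\<Sum>k\<in>{..<length ys}. f (ys ! k))"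
    using sum.permute[OF assms, of "\<lambda>k. f (ys ! k)"] by (simp add: o_def)
  also have "\<dots> = sum_list (map f ys)"
    by (simp add: sum_list_sum_nth atLeast0LessThan)
  finally show ?thesis .
qed

lemma shuffle_analyzer:
  "bind_pmf (shuffle ys) (\<lambda>zs. return_pmf (analyzer n lam r zs)) = return_pmf (analyzer n lam r ys)"
proof -
  let ?P = "{\<sigma>. \<sigma> permutes {..<length ys}}"
  have fin: "finite ?P" by (rule finite_permutations) simp
  have ne: "?P \<noteq> {}" using permutes_id by blast
  have "bind_pmf (shuffle ys) (\<lambda>zs. return_pmf (analyzer n lam r zs))
      = bind_pmf (pmf_of_set ?P) (\<lambda>\<sigma>. return_pmf (analyzer n lam r (map (\<lambda>k. ys ! \<sigma> k) [0..<length ys])))"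
    unfolding shuffle_def by (simp add: bind_assoc_pmf bind_return_pmf)
  also have "\<dots> = bind_pmf (pmf_of_set ?P) (\<lambda>\<sigma>. return_pmf (analyzer n lam r ys))"
  proof (rule bind_pmf_cong[OF refl])
    fix \<sigma> assume "\<sigma> \<in> set_pmf (pmf_of_set ?P)"
    hence "\<sigma> permutes {..<length ys}" using fin ne by simp
    thus "return_pmf (analyzer n lam r (map (\<lambda>k. ys ! \<sigma> k) [0..<length ys])) = return_pmf (analyzer n lam r ys)"
      unfolding analyzer_def by (simp only: sum_list_perm)
  qed
  also have "\<dots> = return_pmf (analyzer n lam r ys)" by simp
  finally show ?thesis .
qed

lemma user_msgs_ujoint:
  "user_msgs n lam r x = map_pmf (\<lambda>w. map snd (snd (snd w))) (ujoint n lam r x)"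
proof -
  have rs: "map_pmf snd (rt n lam b) = randomizer n lam b" for b
    by (simp add: rt_def map_pmf_comp)
  have "map_pmf (\<lambda>w. map snd (snd (snd w))) (ujoint n lam r x)
     = bind_pmf (encoder r x) (\<lambda>bs. map_pmf (map snd) (seq_pmf (map (rt n lam) bs)))"
    unfolding ujoint_def map_bind_pmf by (simp add: map_pmf_def bind_assoc_pmf bind_return_pmf)
  also have "\<dots> = bind_pmf (encoder r x) (\<lambda>bs. seq_pmf (map (randomizer n lam) bs))"
    by (simp add: seq_pmf_map[symmetric] o_def rs)
  finally show ?thesis unfolding user_msgs_def by simp
qed

definition outw :: "nat \<Rightarrow> real \<Rightarrow> nat \<Rightarrow> (real \<times> bool list \<times> (bool \<times> bool) list) list \<Rightarrow> real" where
  "outw n lam r ws = analyzer n lam r (concat (map (\<lambda>w. map snd (snd (snd w))) ws))"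

lemma protocol_eq:
  "real_sum_protocol n lam r X = map_pmf (outw n lam r) (seq_pmf (map (ujoint n lam r) X))"
proof -
  have um: "user_msgs n lam r = (\<lambda>x. map_pmf (\<lambda>w. map snd (snd (snd w))) (ujoint n lam r x))"
    by (rule ext) (rule user_msgs_ujoint)
  have "map (user_msgs n lam r) X = map (map_pmf (\<lambda>w. map snd (snd (snd w)))) (map (ujoint n lam r) X)"
    unfolding um by simp
  hence "seq_pmf (map (user_msgs n lam r) X) = map_pmf (map (\<lambda>w. map snd (snd (snd w)))) (seq_pmf (map (ujoint n lam r) X))"
    by (simp only: seq_pmf_map)
  thus ?thesis unfolding real_sum_protocol_def shuffle_analyzer
    by (simp add: map_pmf_def bind_assoc_pmf bind_return_pmf outw_def)
qed

lemma list_all2_set1': "list_all2 P xs ys \<Longrightarrow> x \<in> set xs \<Longrightarrow> \<exists>y\<in>set ys. P x y"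
  by (induction rule: list_all2_induct) auto

lemma sum_list_concat_map: "sum_list (map g (concat xss)) = sum_list (map (\<lambda>xs. sum_list (map g xs)) xss)"
  by (induction xss) auto

lemma Yw_eq:
  assumes "w \<in> set_pmf (ujoint n lam r x)"
  shows "Yw w = Dw n lam w + (1 - lam / real n) * Cw w + lam / (2 * real n) * real r"
proof -
  obtain x' bs pys where w: "w = (x', bs, pys)" by (cases w) auto
  have m: "map fst pys = bs" and l: "length bs = r" using ujoint_support[OF assms] w by auto
  have l2: "length pys = r" using m l by auto
  have "Dw n lam w = sum_list (map (\<lambda>q. ind (snd q)) pys) - (1 - lam / real n) * sum_list (map (\<lambda>q. ind (fst q)) pys)
      - sum_list (map (\<lambda>q. lam / (2 * real n)) pys)"
  proof -
    have "dd n lam = (\<lambda>q. ind (snd q) - (1 - lam / real n) * ind (fst q) - lam / (2 * real n))"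
      by (rule ext) (simp add: dd_def)
    thus ?thesis by (simp add: w Dw_def sum_list_subtractf sum_list_const_mult)
  qed
  also have "sum_list (map (\<lambda>q. ind (fst q)) pys) = Cw w"
    using m by (simp add: w Cw_def flip: map_map[of ind fst, unfolded o_def])
  also have "sum_list (map (\<lambda>q. lam / (2 * real n)) pys) = lam / (2 * real n) * real r"
    by (simp add: sum_list_triv l2)
  finally show ?thesis by (simp add: w Yw_def)
qed

lemma out_decomp:
  assumes ws: "ws \<in> set_pmf (seq_pmf (map (ujoint n lam r) X))" and len: "length X = n"
    and n: "0 < lam" "lam < real n" and r: "r \<ge> 1"
  shows "outw n lam r ws - sum_list X
    = sum_list (map (\<lambda>w. Cw w - real r * fst w) ws) / real r
      + real n / ((real n - lam) * real r) * sum_list (map (Dw n lam) ws)"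
proof -
  have la: "list_all2 (\<lambda>w x. w \<in> set_pmf (ujoint n lam r x)) ws X" by (rule seq_support[OF ws])
  have lw: "length ws = n" using list_all2_lengthD[OF la] len by simp
  have fx: "map fst ws = X"
    by (rule list_all2_fst, rule list_all2_mono[OF la]) (auto dest: ujoint_support)
  have Y: "Yw w = Dw n lam w + (1 - lam / real n) * Cw w + lam / (2 * real n) * real r" if "w \<in> set ws" for w
    using list_all2_set1'[OF la that] Yw_eq by blast
  have "(\<Sum>y\<leftarrow>concat (map (\<lambda>w. map snd (snd (snd w))) ws). if y then 1 else 0) = sum_list (map Yw ws)"
    unfolding sum_list_concat_map Yw_def[abs_def] ind_def by (simp add: o_def)
  also have "\<dots> = sum_list (map (\<lambda>w. Dw n lam w + (1 - lam / real n) * Cw w + lam / (2 * real n) * real r) ws)"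
    using Y by (intro arg_cong[where f=sum_list] map_cong) auto
  also have "\<dots> = sum_list (map (Dw n lam) ws) + (1 - lam / real n) * sum_list (map Cw ws) + real n * (lam / (2 * real n) * real r)"
    by (simp add: sum_list_addf sum_list_const_mult sum_list_triv lw)
  finally have S: "(\<Sum>y\<leftarrow>concat (map (\<lambda>w. map snd (snd (snd w))) ws). if y then 1 else 0)
     = sum_list (map (Dw n lam) ws) + (1 - lam / real n) * sum_list (map Cw ws) + real n * (lam / (2 * real n) * real r)" .
  have H: "sum_list (map (\<lambda>w. Cw w - real r * fst w) ws) = sum_list (map Cw ws) - real r * sum_list X"
    by (simp add: sum_list_subtractf sum_list_const_mult fx[symmetric] o_def)
  have n0: "real n > 0" "real n - lam > 0" "real r > 0" using n r by auto
  show ?thesis unfolding outw_def analyzer_def S H using n0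
    by (simp add: field_simps)
qed



lemma tail_D:
  assumes lam: "0 < lam" "lam < real n" and len: "length X = n" and r: "r \<ge> 1" and L: "L > 0"
    and lamL: "lam \<ge> 16/9 * L"
  defines "T2 \<equiv> real r * sqrt (2 * (lam / real r) * L)"
  shows "measure_pmf.prob (seq_pmf (map (ujoint n lam r) X)) {ws. T2 \<le> sum_list (map (Dw n lam) ws)} \<le> exp (-L)"
    and "measure_pmf.prob (seq_pmf (map (ujoint n lam r) X)) {ws. T2 \<le> - sum_list (map (Dw n lam) ws)} \<le> exp (-L)"
proof -
  have r0: "real r > 0" using r by simp
  have n0: "real n > 0" using lam by simp
  have arg: "2 * (lam / real r) * L \<ge> 0" using lam L r0 by simp
  have T2sq: "T2\<^sup>2 = 2 * lam * real r * L"
  proof -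
    have "T2\<^sup>2 = (real r)\<^sup>2 * (sqrt (2 * (lam / real r) * L))\<^sup>2" unfolding T2_def by (simp add: power_mult_distrib)
    also have "(sqrt (2 * (lam / real r) * L))\<^sup>2 = 2 * (lam / real r) * L" by (rule real_sqrt_pow2[OF arg])
    finally show ?thesis using r0 by (simp add: power2_eq_square field_simps)
  qed
  have T2pos: "T2 > 0" unfolding T2_def using lam L r0 by simp
  define s where "s = T2 / (lam * real r)"
  have spos: "s > 0" unfolding s_def using T2pos lam r0 by simp
  have sT: "s * T2 = 2 * L" unfolding s_def using T2sq lam r0
    by (simp add: power2_eq_square field_simps)
  have s2: "s\<^sup>2 = 2 * L / (lam * real r)" unfolding s_def using T2sq lam r0
    by (simp add: power_divide power_mult_distrib power2_eq_square field_simps)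
  have "s\<^sup>2 \<le> 2 * L / lam" unfolding s2 using lam L r
    by (simp add: field_simps mult_left_mono)
  also have "\<dots> \<le> 9/8" using lam lamL by (simp add: field_simps)
  finally have "s\<^sup>2 \<le> (11/10)\<^sup>2" by (simp add: power2_eq_square)
  hence "s \<le> 11/10" by (rule power2_le_imp_le) simp
  hence sle: "\<bar>s\<bar> \<le> 11/10" using spos by simp
  hence sle': "\<bar>-s\<bar> \<le> 11/10" by simp
  define c where "c = (exp (lam / (2 * real n) * s\<^sup>2) ^ r) ^ length X"
  have c: "c = exp L"
  proof -
    have "c = exp (real n * (real r * (lam / (2 * real n) * s\<^sup>2)))"
      unfolding c_def len by (simp only: exp_of_nat_mult)
    also have "real n * (real r * (lam / (2 * real n) * s\<^sup>2)) = L"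
      unfolding s2 using lam r0 by (simp add: field_simps)
    finally show ?thesis .
  qed
  have ce: "c * exp (- s * T2) = exp (-L)" unfolding c using sT
    by (simp add: exp_add[symmetric])
  show "measure_pmf.prob (seq_pmf (map (ujoint n lam r) X)) {ws. T2 \<le> sum_list (map (Dw n lam) ws)} \<le> exp (-L)"
  proof -
    have m1: "(\<integral>\<^sup>+ws. ennreal (exp (s * sum_list (map (Dw n lam) ws))) \<partial>seq_pmf (map (ujoint n lam r) X)) \<le> ennreal c"
      unfolding c_def using glob_D_mgf[OF _ _ sle, where X=X and r=r] lam by simp
    show ?thesis using chernoff_pmf[OF spos _ m1, of T2] unfolding ce by (simp add: c)
  qed
  have "(\<integral>\<^sup>+ws. ennreal (exp (s * - sum_list (map (Dw n lam) ws))) \<partial>seq_pmf (map (ujoint n lam r) X))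
     = (\<integral>\<^sup>+ws. ennreal (exp ((-s) * sum_list (map (Dw n lam) ws))) \<partial>seq_pmf (map (ujoint n lam r) X))"
    by simp
  also have "\<dots> \<le> ennreal c" unfolding c_def using glob_D_mgf[OF _ _ sle', where X=X and r=r] lam by simp
  finally have m: "(\<integral>\<^sup>+ws. ennreal (exp (s * - sum_list (map (Dw n lam) ws))) \<partial>seq_pmf (map (ujoint n lam r) X)) \<le> ennreal c" .
  show "measure_pmf.prob (seq_pmf (map (ujoint n lam r) X)) {ws. T2 \<le> - sum_list (map (Dw n lam) ws)} \<le> exp (-L)"
    using chernoff_pmf[OF spos _ m, of T2] unfolding ce by (simp add: c)
qed

lemma tail_H:
  assumes n: "n > 0" and len: "length X = n" and r: "r \<ge> 1" and L: "L > 0"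
    and X: "\<forall>x\<in>set X. 0 \<le> x \<and> x \<le> 1"
  defines "T1 \<equiv> sqrt 2 * sqrt (real n * L)"
  shows "measure_pmf.prob (seq_pmf (map (ujoint n lam r) X)) {ws. T1 \<le> sum_list (map (\<lambda>w. Cw w - real r * fst w) ws)} \<le> exp (-4*L)"
    and "measure_pmf.prob (seq_pmf (map (ujoint n lam r) X)) {ws. T1 \<le> - sum_list (map (\<lambda>w. Cw w - real r * fst w) ws)} \<le> exp (-4*L)"
proof -
  have n0: "real n > 0" using n by simp
  have T1sq: "T1\<^sup>2 = 2 * real n * L"
    unfolding T1_def using n0 L by (simp add: power_mult_distrib)
  have T1pos: "T1 > 0" unfolding T1_def using n0 L by simp
  define s where "s = 4 * T1 / real n"
  have spos: "s > 0" unfolding s_def using T1pos n0 by simp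
  have sT: "s * T1 = 8 * L" unfolding s_def using T1sq n0
    by (simp add: power2_eq_square field_simps)
  have s2: "s\<^sup>2 = 32 * L / real n" unfolding s_def using T1sq n0
    by (simp add: power_divide power_mult_distrib field_simps power2_eq_square)
  define c where "c = exp (s\<^sup>2 / 8) ^ length X"
  have c: "c = exp (4 * L)"
  proof -
    have "c = exp (real n * (s\<^sup>2 / 8))"
      unfolding c_def len by (simp only: exp_of_nat_mult)
    also have "real n * (s\<^sup>2 / 8) = 4 * L"
      unfolding s2 using n0 by (simp add: field_simps)
    finally show ?thesis .
  qed
  have ce: "c * exp (- s * T1) = exp (-4*L)" unfolding c using sT
    by (simp add: exp_add[symmetric])
  show "measure_pmf.prob (seq_pmf (map (ujoint n lam r) X)) {ws. T1 \<le> sum_list (map (\<lambda>w. Cw w - real r * fst w) ws)} \<le> exp (-4*L)"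
  proof -
    have m1: "(\<integral>\<^sup>+ws. ennreal (exp (s * sum_list (map (\<lambda>w. Cw w - real r * fst w) ws))) \<partial>seq_pmf (map (ujoint n lam r) X)) \<le> ennreal c"
      unfolding c_def using glob_H_mgf[OF X r, where s=s and n=n and lam=lam] by simp
    show ?thesis using chernoff_pmf[OF spos _ m1, of T1] unfolding ce by (simp add: c)
  qed
  have "(\<integral>\<^sup>+ws. ennreal (exp (s * - sum_list (map (\<lambda>w. Cw w - real r * fst w) ws))) \<partial>seq_pmf (map (ujoint n lam r) X))
     = (\<integral>\<^sup>+ws. ennreal (exp ((-s) * sum_list (map (\<lambda>w. Cw w - real r * fst w) ws))) \<partial>seq_pmf (map (ujoint n lam r) X))"
    by simp
  also have "\<dots> \<le> ennreal c" unfolding c_def using glob_H_mgf[OF X r, where s="-s" and n=n and lam=lam] by simp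
  finally have m: "(\<integral>\<^sup>+ws. ennreal (exp (s * - sum_list (map (\<lambda>w. Cw w - real r * fst w) ws))) \<partial>seq_pmf (map (ujoint n lam r) X)) \<le> ennreal c" .
  show "measure_pmf.prob (seq_pmf (map (ujoint n lam r) X)) {ws. T1 \<le> - sum_list (map (\<lambda>w. Cw w - real r * fst w) ws)} \<le> exp (-4*L)"
    using chernoff_pmf[OF spos _ m, of T1] unfolding ce by (simp add: c)
qed

theorem theorem5p5:
  fixes \<beta> lam :: real and n r :: nat and X :: "real list"
  assumes "\<beta> > 0"
    and "0 < lam" and "lam < real n"
    and "lam \<ge> 16 / 9 * ln (2 / \<beta>)"
    and "r \<ge> 1"
    and "length X = n" and "\<forall>x \<in> set X. 0 \<le> x \<and> x \<le> 1"
  shows "measure_pmf.prob (real_sum_protocol n lam r X)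
           {y. \<bar>y - sum_list X\<bar> \<ge>
               sqrt 2 / real r * sqrt (real n * ln (2 / \<beta>))
               + real n / (real n - lam) * sqrt (2 * (lam / real r) * ln (2 / \<beta>))}
         < 2 * \<beta>"
proof (cases "\<beta> \<ge> 1")
  case True
  have "measure_pmf.prob (real_sum_protocol n lam r X)
           {y. \<bar>y - sum_list X\<bar> \<ge>
               sqrt 2 / real r * sqrt (real n * ln (2 / \<beta>))
               + real n / (real n - lam) * sqrt (2 * (lam / real r) * ln (2 / \<beta>))} \<le> 1"
    by (rule measure_pmf.prob_le_1)
  then show ?thesis using True by linarith
next
  case False
  note b = assms(1)
  define L where "L = ln (2 / \<beta>)"
  have L: "L > 0" unfolding L_def using False b by (simp add: field_simps)
  have lamL: "lam \<ge> 16/9 * L" using assms(4) L_def by simp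
  have n: "n > 0" using assms(2,3) by simp
  have eL: "exp (-L) = \<beta> / 2" unfolding L_def using b by (simp add: exp_minus)
  have e4L: "exp (-4*L) = (\<beta> / 2)^4"
  proof -
    have "exp (-4*L) = exp (of_nat 4 * (-L))" by simp
    also have "\<dots> = exp (-L) ^ 4" by (rule exp_of_nat_mult)
    finally show ?thesis using eL by simp
  qed
  define M where "M = seq_pmf (map (ujoint n lam r) X)"
  define T1 where "T1 = sqrt 2 * sqrt (real n * L)"
  define T2 where "T2 = real r * sqrt (2 * (lam / real r) * L)"
  define H where "H = (\<lambda>ws. sum_list (map (\<lambda>w. Cw w - real r * fst w) ws))"
  define D where "D = (\<lambda>ws. sum_list (map (Dw n lam) ws))"
  define K where "K = real n / ((real n - lam) * real r)"
  define thr where "thr = sqrt 2 / real r * sqrt (real n * L) + real n / (real n - lam) * sqrt (2 * (lam / real r) * L)"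
  have r0: "real r > 0" using assms(5) by simp
  have K0: "K > 0" unfolding K_def using assms(3) r0 n by (intro divide_pos_pos mult_pos_pos) auto
  have thr: "thr = T1 / real r + K * T2" unfolding thr_def T1_def T2_def K_def using r0 by simp
  let ?S = "{y. \<bar>y - sum_list X\<bar> \<ge> thr}"
  let ?E = "{ws. T1 \<le> H ws} \<union> {ws. T1 \<le> - H ws} \<union> {ws. T2 \<le> D ws} \<union> {ws. T2 \<le> - D ws}"
  have "measure_pmf.prob (real_sum_protocol n lam r X) ?S = measure_pmf.prob M (outw n lam r -` ?S)"
    unfolding protocol_eq M_def by simp
  also have "\<dots> = measure_pmf.prob M (outw n lam r -` ?S \<inter> set_pmf M)"
    by (simp add: measure_Int_set_pmf)
  also have "\<dots> \<le> measure_pmf.prob M ?E"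
  proof (rule measure_pmf.finite_measure_mono)
    show "outw n lam r -` ?S \<inter> set_pmf M \<subseteq> ?E"
    proof
      fix ws assume ws: "ws \<in> outw n lam r -` ?S \<inter> set_pmf M"
      have dec: "outw n lam r ws - sum_list X = H ws / real r + K * D ws"
        using out_decomp[of ws n lam r X] ws assms(2,3,5,6) unfolding M_def H_def D_def K_def by simp
      have ge: "\<bar>H ws / real r + K * D ws\<bar> \<ge> thr" using ws dec by simp
      show "ws \<in> ?E"
      proof (rule ccontr)
        assume "ws \<notin> ?E"
        hence h: "\<bar>H ws\<bar> < T1" and d: "\<bar>D ws\<bar> < T2" by auto
        have "\<bar>H ws / real r + K * D ws\<bar> \<le> \<bar>H ws\<bar> / real r + K * \<bar>D ws\<bar>"
          using K0 r0 by (simp add: abs_mult abs_triangle_ineq[THEN order_trans] abs_divide)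
        also have "\<dots> < T1 / real r + K * T2"
          using h d K0 r0 by (intro add_less_le_mono) (auto simp: divide_strict_right_mono)
        finally show False using ge thr by simp
      qed
    qed
  qed simp
  also have "\<dots> \<le> measure_pmf.prob M {ws. T1 \<le> H ws} + measure_pmf.prob M {ws. T1 \<le> - H ws}
      + measure_pmf.prob M {ws. T2 \<le> D ws} + measure_pmf.prob M {ws. T2 \<le> - D ws}"
  proof -
    have u: "\<And>A B. measure_pmf.prob M (A \<union> B) \<le> measure_pmf.prob M A + measure_pmf.prob M B"
      by (rule measure_Un_le) auto
    show ?thesis
      using u[of "{ws. T1 \<le> H ws} \<union> {ws. T1 \<le> - H ws} \<union> {ws. T2 \<le> D ws}" "{ws. T2 \<le> - D ws}"]
        u[of "{ws. T1 \<le> H ws} \<union> {ws. T1 \<le> - H ws}" "{ws. T2 \<le> D ws}"]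
        u[of "{ws. T1 \<le> H ws}" "{ws. T1 \<le> - H ws}"] by linarith
  qed
  also have "\<dots> \<le> exp (-4*L) + exp (-4*L) + exp (-L) + exp (-L)"
    using tail_H[OF n assms(6,5) L assms(7), where lam=lam] tail_D[OF assms(2,3,6,5) L lamL]
    unfolding M_def H_def D_def T1_def T2_def by (intro add_mono) auto
  also have "\<dots> < 2 * \<beta>"
  proof -
    have "(\<beta>/2)^3 < 1^3" using b False by (intro power_strict_mono) auto
    hence "(\<beta>/2) * (\<beta>/2)^3 < (\<beta>/2) * 1" using b by (intro mult_strict_left_mono) auto
    hence "(\<beta>/2)^4 < \<beta>/2" by (simp add: power_Suc[symmetric] del: power_Suc)
    thus ?thesis unfolding e4L eL by simp
  qed
  finally show ?thesis unfolding thr_def L_def .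
qed

end
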